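(* For any $\alpha>0$, integers $n>0$, $m>2$ with $m>n$, and $k$ with $n\le k\le m$, there exists a full rank matrix $X\in\mathbb{R}^{n\times m}$ such that for every subset $\mathcal S\subseteq[m]$ of cardinality $k$ with $\mathrm{rank}(X_{\mathcal S})=n$, $$\|X_{\mathcal S}^{\dagger}\|_2^2\ge\Big(\frac{m+\alpha^2}{k+\alpha^2}-1\Big)\|X^{\dagger}\|_2^2 .$$
   Context: $[m]=\{1,\dots,m\}$; $X_{\mathcal S}$ is the submatrix of columns of $X$ indexed by $\mathcal S$; $A^\dagger$ is the Moore–Penrose pseudo-inverse; $\|\cdot\|_2$ is the spectral norm. *)

theory Defs
  imports "Jordan_Normal_Form.DL_Rank_Submatrix"
begin

definition mat_rank :: "real mat \<Rightarrow> nat" where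
  "mat_rank A = vec_space.rank (dim_row A) A"

text \<open>Columns of X indexed by S (0-based column indices), all rows kept.\<close>
definition col_submatrix :: "real mat \<Rightarrow> nat set \<Rightarrow> real mat" where
  "col_submatrix X S = submatrix X UNIV S"

text \<open>The four Penrose conditions; the Moore-Penrose pseudo-inverse is the unique matrix satisfying them.\<close>
definition penrose :: "real mat \<Rightarrow> real mat \<Rightarrow> bool" where
  "penrose A B \<longleftrightarrow> B \<in> carrier_mat (dim_col A) (dim_row A) \<and>
     A * B * A = A \<and> B * A * B = B \<and>
     transpose_mat (A * B) = A * B \<and> transpose_mat (B * A) = B * A"

definition pinv :: "real mat \<Rightarrow> real mat" where
  "pinv A = (THE B. penrose A B)"

definition vnorm2 :: "real vec \<Rightarrow> real" where
  "vnorm2 v = sqrt (v \<bullet> v)"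

definition spec_norm :: "real mat \<Rightarrow> real" where
  "spec_norm A = Sup {vnorm2 (A *\<^sub>v x) | x. x \<in> carrier_vec (dim_col A) \<and> vnorm2 x \<le> 1}"

end

theory Submission
  imports Defs
begin

lemma (in vec_space) exists_max_indpt:
  obtains T where "maximal T (\<lambda>T. T \<subseteq> set (cols A) \<and> lin_indpt T)"
proof -
  have "\<exists>T. finite T \<and> maximal T (\<lambda>T. T \<subseteq> set (cols A) \<and> lin_indpt T)"
  proof (rule maximal_exists[of _ "card (set (cols A))" "{}"])
    fix T assume "T \<subseteq> set (cols A) \<and> lin_indpt T"
    then have "T \<subseteq> set (cols A)" by blast
    then show "finite T \<and> card T \<le> card (set (cols A))"
      using finite_subset card_mono by (metis List.finite_set)
  next
    have "{} \<subseteq> carrier_vec n \<and> lin_indpt {}"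
      by (metis (no_types) empty_subsetI fin_dim finite_basis_exists subset_li_is_li vec_vs vectorspace.basis_def)
    then show "{} \<subseteq> set (cols A) \<and> lin_indpt {}" by blast
  qed
  then show ?thesis using that by blast
qed

lemma (in vec_space) rank_le_nr:
  assumes A: "A \<in> carrier_mat n k"
  shows "rank A \<le> n"
proof -
  obtain T where T: "maximal T (\<lambda>T. T \<subseteq> set (cols A) \<and> lin_indpt T)" by (rule exists_max_indpt)
  have r: "rank A = card T" using rank_card_indpt[OF A T] .
  have cA: "set (cols A) \<subseteq> carrier_vec n" using cols_dim[of A] A by simp
  have TA: "T \<subseteq> set (cols A)" and li: "lin_indpt T" using T unfolding maximal_def by blast+
  have sub: "T \<subseteq> carrier_vec n" using TA cA by (rule subset_trans)
  have "card T \<le> dim" using li_le_dim(2)[OF fin_dim sub li] .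
  then show ?thesis using r dim_is_n by simp
qed

lemma (in vec_space) rank_row_nonzero:
  assumes A: "A \<in> carrier_mat n k" and r: "rank A = n" and i: "i < n"
  shows "\<exists>l<k. A $$ (i,l) \<noteq> 0"
proof (rule ccontr)
  assume "\<not> (\<exists>l<k. A $$ (i,l) \<noteq> 0)"
  then have z: "\<And>l. l < k \<Longrightarrow> A $$ (i,l) = 0" by auto
  obtain T where T: "maximal T (\<lambda>T. T \<subseteq> set (cols A) \<and> lin_indpt T)" by (rule exists_max_indpt)
  have cT: "card T = n" using rank_card_indpt[OF A T] r by simp
  have cA: "set (cols A) \<subseteq> carrier_vec n" using cols_dim[of A] A by simp
  have TA: "T \<subseteq> set (cols A)" and li: "lin_indpt T" using T unfolding maximal_def by blast+
  have sub: "T \<subseteq> carrier_vec n" using TA cA by (rule subset_trans)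
  have fin: "finite T" using li_le_dim(1)[OF fin_dim sub li] .
  have "basis T" using dim_li_is_basis[OF fin_dim fin sub li] cT dim_is_n by simp
  then have sp: "span T = carrier_vec n" unfolding basis_def by simp
  have "unit_vec n i \<in> span T" using sp i by simp
  then obtain a U where U: "unit_vec n i = lincomb a U" "finite U" "U \<subseteq> T"
    unfolding span_def by blast
  have "lincomb a U $ i = (\<Sum>x\<in>U. a x * x $ i)"
    using lincomb_index[OF i] U sub by blast
  also have "\<dots> = 0"
  proof (rule sum.neutral, intro ballI)
    fix x assume "x \<in> U"
    then have "x \<in> set (cols A)" using U TA by blast
    then obtain l where l: "l < length (cols A)" "cols A ! l = x" by (auto simp: in_set_conv_nth)
    have lk: "l < k" using l(1) A by simp
    have xe: "x = col A l" using l(2) cols_nth[of l A] lk A by simp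
    have "x $ i = A $$ (i,l)" using xe lk A i by simp
    then show "a x * x $ i = 0" using z lk by simp
  qed
  finally have "lincomb a U $ i = 0" .
  moreover have "unit_vec n i $ i = lincomb a U $ i" by (simp only: U(1))
  ultimately show False using i by simp
qed

lemma penrose_unique:
  assumes pB: "penrose A B" and pC: "penrose A C"
  shows "B = C"
proof -
  define r c where "r = dim_row A" and "c = dim_col A"
  have A: "A \<in> carrier_mat r c" unfolding r_def c_def by auto
  have B: "B \<in> carrier_mat c r" using pB unfolding penrose_def r_def c_def by auto
  have C: "C \<in> carrier_mat c r" using pC unfolding penrose_def r_def c_def by auto
  have B1: "A * B * A = A" and B2: "B * A * B = B" and B3: "(A * B)\<^sup>T = A * B" and B4: "(B * A)\<^sup>T = B * A"
    using pB unfolding penrose_def by auto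
  have C1: "A * C * A = A" and C2: "C * A * C = C" and C3: "(A * C)\<^sup>T = A * C" and C4: "(C * A)\<^sup>T = C * A"
    using pC unfolding penrose_def by auto
  have AB: "A * B = A * C"
  proof -
    have "A * B = (A * B)\<^sup>T" using B3 by simp
    also have "\<dots> = B\<^sup>T * A\<^sup>T" using transpose_mult[OF A B] .
    also have "\<dots> = B\<^sup>T * (A * C * A)\<^sup>T" using C1 by simp
    also have "(A * C * A)\<^sup>T = A\<^sup>T * (A * C)\<^sup>T"
      using transpose_mult[of "A * C" r r A c] A C by simp
    also have "(A * C)\<^sup>T = A * C" by (rule C3)
    also have "B\<^sup>T * (A\<^sup>T * (A * C)) = (B\<^sup>T * A\<^sup>T) * (A * C)"
      using A B C by (metis assoc_mult_mat mult_carrier_mat transpose_carrier_mat)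
    also have "B\<^sup>T * A\<^sup>T = A * B" using transpose_mult[OF A B] B3 by simp
    also have "(A * B) * (A * C) = (A * B * A) * C"
      using A B C by (metis assoc_mult_mat mult_carrier_mat)
    also have "\<dots> = A * C" using B1 by simp
    finally show ?thesis .
  qed
  have BA: "B * A = C * A"
  proof -
    have "B * A = (B * A)\<^sup>T" using B4 by simp
    also have "\<dots> = A\<^sup>T * B\<^sup>T" using transpose_mult[OF B A] .
    also have "\<dots> = (A * C * A)\<^sup>T * B\<^sup>T" using C1 by simp
    also have "(A * C * A)\<^sup>T = (C * A)\<^sup>T * A\<^sup>T"
    proof -
      have e: "A * C * A = A * (C * A)" using assoc_mult_mat[OF A C A] .
      have CA: "C * A \<in> carrier_mat c c" using C A by simp
      show ?thesis unfolding e using transpose_mult[OF A CA] .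
    qed
    also have "(C * A)\<^sup>T = C * A" by (rule C4)
    also have "(C * A) * A\<^sup>T * B\<^sup>T = (C * A) * (A\<^sup>T * B\<^sup>T)"
      using A B C by (metis assoc_mult_mat mult_carrier_mat transpose_carrier_mat)
    also have "A\<^sup>T * B\<^sup>T = B * A" using transpose_mult[OF B A] B4 by simp
    also have "(C * A) * (B * A) = C * (A * B * A)"
      using A B C by (metis assoc_mult_mat mult_carrier_mat)
    also have "\<dots> = C * A" using B1 by simp
    finally show ?thesis .
  qed
  have "B = B * A * B" using B2 by simp
  also have "\<dots> = B * (A * C)" using AB A B by (metis assoc_mult_mat)
  also have "\<dots> = (B * A) * C" using A B C by (metis assoc_mult_mat)
  also have "\<dots> = C * A * C" using BA by simp
  also have "\<dots> = C" using C2 .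
  finally show ?thesis .
qed

lemma pinv_eqI: "penrose A B \<Longrightarrow> pinv A = B"
  unfolding pinv_def using penrose_unique by blast

lemma penrose_exI:
  fixes A E :: "real mat"
  assumes A: "A \<in> carrier_mat r c" and E: "E \<in> carrier_mat r r"
    and ID: "A * A\<^sup>T * E = 1\<^sub>m r" and ES: "E\<^sup>T = E"
  shows "penrose A (A\<^sup>T * E)"
proof -
  have At: "A\<^sup>T \<in> carrier_mat c r" using A by simp
  have ID': "A * (A\<^sup>T * E) = 1\<^sub>m r" using ID A E At by (metis assoc_mult_mat)
  have 1: "A * (A\<^sup>T * E) * A = A" using ID' A by simp
  have 2: "A\<^sup>T * E * A * (A\<^sup>T * E) = A\<^sup>T * E"
  proof -
    have "A\<^sup>T * E * A * (A\<^sup>T * E) = A\<^sup>T * E * (A * (A\<^sup>T * E))"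
      using A E At by (metis assoc_mult_mat mult_carrier_mat)
    also have "\<dots> = A\<^sup>T * E" using ID' A E At by simp
    finally show ?thesis .
  qed
  have 3: "(A * (A\<^sup>T * E))\<^sup>T = A * (A\<^sup>T * E)" using ID' by simp
  have 4: "(A\<^sup>T * E * A)\<^sup>T = A\<^sup>T * E * A"
  proof -
    have "(A\<^sup>T * E * A)\<^sup>T = A\<^sup>T * (A\<^sup>T * E)\<^sup>T"
      using transpose_mult[of "A\<^sup>T * E" c r A c] A E At by simp
    also have "(A\<^sup>T * E)\<^sup>T = E\<^sup>T * A\<^sup>T\<^sup>T" using transpose_mult[OF At E] .
    also have "\<dots> = E * A" using ES by simp
    also have "A\<^sup>T * (E * A) = A\<^sup>T * E * A" using A E At by (metis assoc_mult_mat)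
    finally show ?thesis .
  qed
  show ?thesis unfolding penrose_def using 1 2 3 4 A E At by auto
qed

lemma penrose_norm:
  fixes A E :: "real mat"
  assumes A: "A \<in> carrier_mat r c" and E: "E \<in> carrier_mat r r"
    and ID: "A * A\<^sup>T * E = 1\<^sub>m r" and x: "x \<in> carrier_vec r"
  shows "((A\<^sup>T * E) *\<^sub>v x) \<bullet> ((A\<^sup>T * E) *\<^sub>v x) = (E *\<^sub>v x) \<bullet> x"
proof -
  have At: "A\<^sup>T \<in> carrier_mat c r" using A by simp
  define y where "y = E *\<^sub>v x"
  have y: "y \<in> carrier_vec r" using E x y_def by simp
  have e: "(A\<^sup>T * E) *\<^sub>v x = A\<^sup>T *\<^sub>v y" using At E x y_def by simp
  have z: "A\<^sup>T *\<^sub>v y \<in> carrier_vec c" using At y by simp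
  have "(A\<^sup>T *\<^sub>v y) \<bullet> (A\<^sup>T *\<^sub>v y) = y \<bullet> (A *\<^sub>v (A\<^sup>T *\<^sub>v y))"
    using transpose_vec_mult_scalar[OF A z y] .
  also have "A *\<^sub>v (A\<^sup>T *\<^sub>v y) = (A * A\<^sup>T * E) *\<^sub>v x"
  proof -
    have "(A * A\<^sup>T * E) *\<^sub>v x = (A * A\<^sup>T) *\<^sub>v (E *\<^sub>v x)"
      using assoc_mult_mat_vec[of "A * A\<^sup>T" r r E r x] A At E x by simp
    also have "\<dots> = A *\<^sub>v (A\<^sup>T *\<^sub>v (E *\<^sub>v x))"
      using assoc_mult_mat_vec[of A r c "A\<^sup>T" r "E *\<^sub>v x"] A At E x by simp
    finally show ?thesis using y_def by simp
  qed
  also have "\<dots> = x" using ID x by simp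
  finally show ?thesis using e y_def by simp
qed


definition dmat :: "nat \<Rightarrow> (nat \<Rightarrow> real) \<Rightarrow> real mat" where
  "dmat r d = mat r r (\<lambda>(i,j). if i = j then d i else 0)"

lemma dmat_carrier[simp]: "dmat r d \<in> carrier_mat r r" unfolding dmat_def by simp

lemma dmat_transpose[simp]: "(dmat r d)\<^sup>T = dmat r d"
  unfolding dmat_def by (rule eq_matI) auto

lemma sum_if_eq: "(i::nat) < r \<Longrightarrow> (\<Sum>l\<in>{0..<r}. (if i = l then f l else 0)) = (f i :: real)"
  by (simp add: sum.delta sum.delta')

lemma dmat_mult: "dmat r d * dmat r e = dmat r (\<lambda>i. d i * e i)"
proof (rule eq_matI)
  fix i j assume i: "i < dim_row (dmat r (\<lambda>i. d i * e i))" and j: "j < dim_col (dmat r (\<lambda>i. d i * e i))"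
  then have ir: "i < r" and jr: "j < r" unfolding dmat_def by auto
  have "(dmat r d * dmat r e) $$ (i,j) = (\<Sum>l\<in>{0..<r}. (if i = l then d i else 0) * (if l = j then e l else 0))"
    using ir jr unfolding dmat_def by (simp add: scalar_prod_def)
  also have "\<dots> = (\<Sum>l\<in>{0..<r}. (if i = l then (if i = j then d i * e i else 0) else 0))"
    by (rule sum.cong) auto
  also have "\<dots> = (if i = j then d i * e i else 0)" using sum_if_eq[OF ir] .
  finally show "(dmat r d * dmat r e) $$ (i,j) = dmat r (\<lambda>i. d i * e i) $$ (i,j)"
    using ir jr unfolding dmat_def by simp
qed (auto simp: dmat_def)

lemma dmat_inv: "(\<And>i. i < r \<Longrightarrow> d i \<noteq> 0) \<Longrightarrow> dmat r d * dmat r (\<lambda>i. 1 / d i) = 1\<^sub>m r"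
  unfolding dmat_mult by (rule eq_matI) (auto simp: dmat_def)

lemma dmat_mult_vec: "x \<in> carrier_vec r \<Longrightarrow> (dmat r d *\<^sub>v x) \<bullet> x = (\<Sum>i<r. d i * (x $ i)^2)"
proof -
  assume x: "x \<in> carrier_vec r"
  have e: "\<And>i. i < r \<Longrightarrow> (dmat r d *\<^sub>v x) $ i = d i * x $ i"
  proof -
    fix i assume ir: "i < r"
    have "(dmat r d *\<^sub>v x) $ i = (\<Sum>l\<in>{0..<r}. (if i = l then d i else 0) * x $ l)"
      using ir x unfolding dmat_def by (simp add: scalar_prod_def)
    also have "\<dots> = (\<Sum>l\<in>{0..<r}. (if i = l then d i * x $ i else 0))"
      by (rule sum.cong) auto
    also have "\<dots> = d i * x $ i" using sum_if_eq[OF ir] .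
    finally show "(dmat r d *\<^sub>v x) $ i = d i * x $ i" .
  qed
  have "(dmat r d *\<^sub>v x) \<bullet> x = (\<Sum>i\<in>{0..<r}. (dmat r d *\<^sub>v x) $ i * x $ i)"
    using x by (simp add: scalar_prod_def)
  also have "\<dots> = (\<Sum>i<r. d i * (x $ i)^2)"
    using e by (simp add: atLeast0LessThan power2_eq_square mult.assoc)
  finally show ?thesis .
qed

lemma gram_diag:
  fixes A :: "real mat"
  assumes A: "A \<in> carrier_mat r c"
    and sep: "\<And>l i j. l < c \<Longrightarrow> i < r \<Longrightarrow> j < r \<Longrightarrow> i \<noteq> j \<Longrightarrow> A $$ (i,l) * A $$ (j,l) = 0"
  shows "A * A\<^sup>T = dmat r (\<lambda>i. \<Sum>l<c. (A $$ (i,l))^2)"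
proof (rule eq_matI)
  fix i j assume i: "i < dim_row (dmat r (\<lambda>i. \<Sum>l<c. (A $$ (i,l))^2))"
    and j: "j < dim_col (dmat r (\<lambda>i. \<Sum>l<c. (A $$ (i,l))^2))"
  then have ir: "i < r" and jr: "j < r" unfolding dmat_def by auto
  have "(A * A\<^sup>T) $$ (i,j) = (\<Sum>l\<in>{0..<c}. A $$ (i,l) * A $$ (j,l))"
    using ir jr A by (simp add: scalar_prod_def)
  also have "\<dots> = (if i = j then (\<Sum>l<c. (A $$ (i,l))^2) else 0)"
    using sep ir jr by (auto simp: atLeast0LessThan power2_eq_square intro!: sum.neutral)
  finally show "(A * A\<^sup>T) $$ (i,j) = dmat r (\<lambda>i. \<Sum>l<c. (A $$ (i,l))^2) $$ (i,j)"
    using ir jr unfolding dmat_def by simp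
qed (use A in \<open>auto simp: dmat_def\<close>)


lemma dot_self: "(x :: real vec) \<in> carrier_vec r \<Longrightarrow> x \<bullet> x = (\<Sum>i<r. (x $ i)^2)"
  by (simp add: scalar_prod_def atLeast0LessThan power2_eq_square)

lemma dot_self_nonneg: "x \<in> carrier_vec r \<Longrightarrow> 0 \<le> (x :: real vec) \<bullet> x"
proof -
  assume x: "x \<in> carrier_vec r"
  show ?thesis unfolding dot_self[OF x] by (rule sum_nonneg) simp
qed

lemma vnorm2_sq: "x \<in> carrier_vec r \<Longrightarrow> (vnorm2 x)^2 = x \<bullet> x"
proof -
  assume x: "x \<in> carrier_vec r"
  have "0 \<le> x \<bullet> x" using dot_self_nonneg[OF x] .
  then show ?thesis unfolding vnorm2_def by (rule real_sqrt_pow2)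
qed

lemma vnorm2_nonneg: "0 \<le> vnorm2 x"
proof -
  have "x \<in> carrier_vec (dim_vec x)" by (rule carrier_vecI) (rule refl)
  then have "0 \<le> x \<bullet> x" by (rule dot_self_nonneg)
  then show ?thesis unfolding vnorm2_def by (rule real_sqrt_ge_zero)
qed

lemma vnorm2_le1: "vnorm2 x \<le> 1 \<Longrightarrow> x \<bullet> x \<le> 1"
  unfolding vnorm2_def by (metis real_sqrt_le_1_iff)

lemma vnorm2_zero: "vnorm2 (0\<^sub>v r) = 0"
proof -
  have "(0\<^sub>v r :: real vec) \<bullet> 0\<^sub>v r = 0" by (rule scalar_prod_left_zero) (rule zero_carrier_vec)
  then show ?thesis unfolding vnorm2_def by (metis real_sqrt_zero)
qed

lemma vnorm2_le1I: "x \<bullet> x \<le> 1 \<Longrightarrow> vnorm2 x \<le> 1"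
  unfolding vnorm2_def by (metis real_sqrt_le_1_iff)

lemma spec_norm_upper:
  fixes B :: "real mat"
  assumes B: "B \<in> carrier_mat c r" and K: "0 \<le> K"
    and bd: "\<And>x. x \<in> carrier_vec r \<Longrightarrow> (B *\<^sub>v x) \<bullet> (B *\<^sub>v x) \<le> K * (x \<bullet> x)"
  shows "(spec_norm B)^2 \<le> K"
proof -
  let ?S = "{vnorm2 (B *\<^sub>v x) | x. x \<in> carrier_vec (dim_col B) \<and> vnorm2 x \<le> 1}"
  have dB: "dim_col B = r" using B by simp
  have el: "\<And>v. v \<in> ?S \<Longrightarrow> 0 \<le> v \<and> v \<le> sqrt K"
  proof -
    fix v assume "v \<in> ?S"
    then obtain x where x: "x \<in> carrier_vec r" "vnorm2 x \<le> 1" "v = vnorm2 (B *\<^sub>v x)"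
      unfolding dB by blast
    have Bx: "B *\<^sub>v x \<in> carrier_vec c" using B x(1) by (rule mult_mat_vec_carrier)
    have "v^2 = (B *\<^sub>v x) \<bullet> (B *\<^sub>v x)" unfolding x(3) by (rule vnorm2_sq[OF Bx])
    also have "\<dots> \<le> K * (x \<bullet> x)" using bd[OF x(1)] .
    also have "\<dots> \<le> K * 1" using vnorm2_le1[OF x(2)] K by (rule mult_left_mono)
    finally have "v^2 \<le> K" by simp
    moreover have "0 \<le> v" unfolding x(3) by (rule vnorm2_nonneg)
    ultimately show "0 \<le> v \<and> v \<le> sqrt K" using real_le_rsqrt by blast
  qed
  have z: "0 \<in> ?S"
  proof -
    have "B *\<^sub>v 0\<^sub>v r = 0\<^sub>v c" using B by (intro eq_vecI) auto
    then have "0 = vnorm2 (B *\<^sub>v 0\<^sub>v r)" using vnorm2_zero[of c] by simp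
    moreover have "0\<^sub>v r \<in> carrier_vec (dim_col B)" unfolding dB by (rule zero_carrier_vec)
    moreover have "vnorm2 (0\<^sub>v r) \<le> 1" using vnorm2_zero[of r] by simp
    ultimately show ?thesis by blast
  qed
  have ne: "?S \<noteq> {}" using z by blast
  have bdd: "bdd_above ?S" using el by (meson bdd_aboveI)
  have up: "spec_norm B \<le> sqrt K" unfolding spec_norm_def using el ne by (meson cSup_least)
  have lo: "0 \<le> spec_norm B" unfolding spec_norm_def using cSup_upper[OF z bdd] .
  have "(spec_norm B)^2 \<le> (sqrt K)^2" using power_mono[OF up lo, of 2] .
  also have "(sqrt K)^2 = K" using K by (rule real_sqrt_pow2)
  finally show ?thesis .
qed

lemma spec_norm_lower:
  fixes B :: "real mat"
  assumes B: "B \<in> carrier_mat c r" and M: "\<And>x. x \<in> carrier_vec r \<Longrightarrow> x \<bullet> x \<le> 1 \<Longrightarrow> (B *\<^sub>v x) \<bullet> (B *\<^sub>v x) \<le> M"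
    and x0: "x0 \<in> carrier_vec r" "x0 \<bullet> x0 \<le> 1"
  shows "(B *\<^sub>v x0) \<bullet> (B *\<^sub>v x0) \<le> (spec_norm B)^2"
proof -
  let ?S = "{vnorm2 (B *\<^sub>v x) | x. x \<in> carrier_vec (dim_col B) \<and> vnorm2 x \<le> 1}"
  have dB: "dim_col B = r" using B by simp
  have el: "\<And>v. v \<in> ?S \<Longrightarrow> v \<le> sqrt M"
  proof -
    fix v assume "v \<in> ?S"
    then obtain x where x: "x \<in> carrier_vec r" "vnorm2 x \<le> 1" "v = vnorm2 (B *\<^sub>v x)"
      unfolding dB by blast
    have Bx: "B *\<^sub>v x \<in> carrier_vec c" using B x(1) by (rule mult_mat_vec_carrier)
    have "v^2 = (B *\<^sub>v x) \<bullet> (B *\<^sub>v x)" unfolding x(3) by (rule vnorm2_sq[OF Bx])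
    also have "\<dots> \<le> M" using M[OF x(1) vnorm2_le1[OF x(2)]] .
    finally show "v \<le> sqrt M" using real_le_rsqrt by blast
  qed
  have bdd: "bdd_above ?S" using el by (meson bdd_aboveI)
  have x0n: "vnorm2 x0 \<le> 1" using x0(2) by (rule vnorm2_le1I)
  have x0c: "x0 \<in> carrier_vec (dim_col B)" unfolding dB by (rule x0(1))
  have "vnorm2 (B *\<^sub>v x0) \<in> ?S" using x0c x0n by blast
  then have "vnorm2 (B *\<^sub>v x0) \<le> spec_norm B" unfolding spec_norm_def by (rule cSup_upper[OF _ bdd])
  then have "(vnorm2 (B *\<^sub>v x0))^2 \<le> (spec_norm B)^2"
    using power_mono[of "vnorm2 (B *\<^sub>v x0)" "spec_norm B" 2] vnorm2_nonneg[of "B *\<^sub>v x0"] by blast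
  moreover have "B *\<^sub>v x0 \<in> carrier_vec c" using B x0(1) by (rule mult_mat_vec_carrier)
  ultimately show ?thesis using vnorm2_sq[of "B *\<^sub>v x0" c] by simp
qed

lemma pinv_diag:
  fixes A :: "real mat"
  assumes A: "A \<in> carrier_mat r c"
    and sep: "\<And>l i j. l < c \<Longrightarrow> i < r \<Longrightarrow> j < r \<Longrightarrow> i \<noteq> j \<Longrightarrow> A $$ (i,l) * A $$ (j,l) = 0"
    and pos: "\<And>i. i < r \<Longrightarrow> d i > 0"
    and d: "d = (\<lambda>i. \<Sum>l<c. (A $$ (i,l))^2)"
  shows "pinv A = A\<^sup>T * dmat r (\<lambda>i. 1 / d i)"
    and "\<And>x. x \<in> carrier_vec r \<Longrightarrow> (pinv A *\<^sub>v x) \<bullet> (pinv A *\<^sub>v x) = (\<Sum>i<r. (1 / d i) * (x $ i)^2)"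
proof -
  have G: "A * A\<^sup>T = dmat r d" using gram_diag[OF A sep] d by simp
  have ID: "A * A\<^sup>T * dmat r (\<lambda>i. 1 / d i) = 1\<^sub>m r"
    unfolding G using dmat_inv[of r d] pos by (metis less_irrefl)
  show P: "pinv A = A\<^sup>T * dmat r (\<lambda>i. 1 / d i)"
    by (rule pinv_eqI, rule penrose_exI[OF A dmat_carrier ID dmat_transpose])
  fix x :: "real vec" assume x: "x \<in> carrier_vec r"
  show "(pinv A *\<^sub>v x) \<bullet> (pinv A *\<^sub>v x) = (\<Sum>i<r. (1 / d i) * (x $ i)^2)"
    unfolding P penrose_norm[OF A dmat_carrier ID x] dmat_mult_vec[OF x] ..
qed

lemma det_dmat_nz:
  assumes "\<And>i. i < r \<Longrightarrow> d i \<noteq> 0"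
  shows "det (dmat r d) \<noteq> 0"
proof -
  have ut: "upper_triangular (dmat r d)" unfolding upper_triangular_def dmat_def by auto
  have "det (dmat r d) = prod_list (diag_mat (dmat r d))"
    by (rule det_upper_triangular[OF ut dmat_carrier])
  moreover have "0 \<notin> set (diag_mat (dmat r d))"
    using assms unfolding diag_mat_def dmat_def by auto
  ultimately show ?thesis by (simp add: prod_list_zero_iff)
qed

definition Xf :: "nat \<Rightarrow> real \<Rightarrow> nat \<Rightarrow> nat \<Rightarrow> real" where
  "Xf n c i p = (if p < n - 1 then (if i = p then c else 0) else (if i = n - 1 then 1 else 0))"

lemma Xf_sep: "i \<noteq> j \<Longrightarrow> Xf n c i p * Xf n c j p = 0"
  by (auto simp: Xf_def)

lemma count_split:
  fixes P :: "nat \<Rightarrow> bool"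
  shows "card {l\<in>{..<k}. P l} + card {l\<in>{..<k}. \<not> P l} = k"
proof -
  have "card ({l\<in>{..<k}. P l} \<union> {l\<in>{..<k}. \<not> P l}) = card {l\<in>{..<k}. P l} + card {l\<in>{..<k}. \<not> P l}"
    by (rule card_Un_disjoint) auto
  moreover have "{l\<in>{..<k}. P l} \<union> {l\<in>{..<k}. \<not> P l} = {..<k}" by auto
  ultimately show ?thesis by simp
qed

lemma sum_indic:
  fixes P :: "nat \<Rightarrow> bool"
  shows "(\<Sum>l<k. (if P l then 0 else 1 :: real)) = real (card {l\<in>{..<k}. \<not> P l})"
proof -
  have "(\<Sum>l<k. (if P l then 0 else 1 :: real)) = (\<Sum>l\<in>{l\<in>{..<k}. \<not> P l}. 1)"
    by (subst sum.inter_filter) (auto intro: sum.cong)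
  then show ?thesis by simp
qed

theorem theorem4p3:
  fixes \<alpha> :: real and n m k :: nat
  assumes "\<alpha> > 0" and "n > 0" and "m > 2" and "m > n" and "n \<le> k" and "k \<le> m"
  shows "\<exists>X \<in> carrier_mat n m. mat_rank X = n \<and>
           (\<forall>S. S \<subseteq> {..<m} \<and> card S = k \<and> mat_rank (col_submatrix X S) = n \<longrightarrow>
              (spec_norm (pinv (col_submatrix X S)))\<^sup>2 \<ge>
                ((real m + \<alpha>\<^sup>2) / (real k + \<alpha>\<^sup>2) - 1) * (spec_norm (pinv X))\<^sup>2)"
proof -
  note nm = assms(4) and n0 = assms(2) and nk = assms(5) and km = assms(6)
  define c where "c = real (m - n + 1)"
  have c1: "c \<ge> 1" unfolding c_def by simp
  define X where "X = mat n m (\<lambda>(i,p). Xf n c i p)"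
  have Xc: "X \<in> carrier_mat n m" unfolding X_def by simp
  have Xidx: "\<And>i p. i < n \<Longrightarrow> p < m \<Longrightarrow> X $$ (i,p) = Xf n c i p" unfolding X_def by simp
  have rX: "mat_rank X = n"
  proof -
    have le: "vec_space.rank n X \<le> n" using vec_space.rank_le_nr[OF Xc] .
    have sub: "submatrix X UNIV {..<n} = dmat n (\<lambda>i. if i < n - 1 then c else 1)"
    proof (rule eq_matI)
      have cr: "card {i. i < dim_row X \<and> i \<in> UNIV} = n" using Xc by simp
      have cc: "card {j. j < dim_col X \<and> j \<in> {..<n}} = n"
      proof -
        have "{j. j < dim_col X \<and> j \<in> {..<n}} = {..<n}" using Xc nm by auto
        then show ?thesis by simp
      qed
      show "dim_row (submatrix X UNIV {..<n}) = dim_row (dmat n (\<lambda>i. if i < n - 1 then c else 1))"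
        using cr by (simp add: dim_submatrix dmat_def)
      show "dim_col (submatrix X UNIV {..<n}) = dim_col (dmat n (\<lambda>i. if i < n - 1 then c else 1))"
        using cc by (simp add: dim_submatrix dmat_def)
      fix i j assume i: "i < dim_row (dmat n (\<lambda>i. if i < n - 1 then c else 1))"
        and j: "j < dim_col (dmat n (\<lambda>i. if i < n - 1 then c else 1))"
      then have ir: "i < n" and jr: "j < n" unfolding dmat_def by auto
      have pj: "pick {..<n} j = j"
      proof -
        have "{a\<in>{..<n}. a < j} = {..<j}" using jr by auto
        then show ?thesis using pick_card_in_set[of j "{..<n}"] jr by simp
      qed
      have "submatrix X UNIV {..<n} $$ (i,j) = X $$ (pick UNIV i, pick {..<n} j)"
        by (rule submatrix_index) (use cr cc ir jr in auto)
      also have "\<dots> = Xf n c i j" using pj pick_UNIV Xidx ir jr nm by simp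
      also have "\<dots> = dmat n (\<lambda>i. if i < n - 1 then c else 1) $$ (i,j)"
        using ir jr unfolding Xf_def dmat_def by auto
      finally show "submatrix X UNIV {..<n} $$ (i,j) = dmat n (\<lambda>i. if i < n - 1 then c else 1) $$ (i,j)" .
    qed
    have "det (submatrix X UNIV {..<n}) \<noteq> 0" unfolding sub
      by (rule det_dmat_nz) (use c1 in auto)
    then have "card {j. j < m \<and> j \<in> {..<n}} \<le> vec_space.rank n X"
      using vec_space.rank_gt_minor[OF Xc] by blast
    moreover have "{j. j < m \<and> j \<in> {..<n}} = {..<n}" using nm by auto
    ultimately have "n \<le> vec_space.rank n X" by simp
    then show ?thesis unfolding mat_rank_def using le Xc by simp
  qed
  define D where "D = (\<lambda>i. \<Sum>l<m. (X $$ (i,l))^2)"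
  have Dc: "\<And>i. i < n \<Longrightarrow> D i \<ge> c"
  proof -
    fix i assume ir: "i < n"
    show "D i \<ge> c"
    proof (cases "i < n - 1")
      case True
      have "c \<le> c^2" using c1 by (simp add: power2_eq_square)
      also have "c^2 = (X $$ (i,i))^2" using Xidx ir nm True unfolding Xf_def by simp
      also have "\<dots> \<le> D i" unfolding D_def
        by (rule member_le_sum) (use ir nm in auto)
      finally show ?thesis .
    next
      case False
      then have iv: "i = n - 1" using ir by simp
      have "D i = (\<Sum>l<m. (if l < n - 1 then 0 else 1 :: real))"
        unfolding D_def by (rule sum.cong) (use Xidx ir iv in \<open>auto simp: Xf_def\<close>)
      also have "\<dots> = real (card {l\<in>{..<m}. \<not> l < n - 1})" by (rule sum_indic)
      also have "{l\<in>{..<m}. \<not> l < n - 1} = {n - 1..<m}" by auto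
      finally show ?thesis unfolding c_def using nm n0 by simp
    qed
  qed
  have Dpos: "\<And>i. i < n \<Longrightarrow> D i > 0"
  proof -
    fix i assume "i < n"
    then show "D i > 0" using Dc[of i] c1 by linarith
  qed
  have sepX: "\<And>l i j. l < m \<Longrightarrow> i < n \<Longrightarrow> j < n \<Longrightarrow> i \<noteq> j \<Longrightarrow> X $$ (i,l) * X $$ (j,l) = 0"
  proof -
    fix l i j assume h: "l < m" "i < n" "j < n" "i \<noteq> j"
    show "X $$ (i,l) * X $$ (j,l) = 0" using Xidx[OF h(2,1)] Xidx[OF h(3,1)] Xf_sep[OF h(4)] by metis
  qed
  note PX = pinv_diag[OF Xc sepX Dpos D_def]
  have PX1: "pinv X = X\<^sup>T * dmat n (\<lambda>i. 1 / D i)" by (rule PX(1))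
  have PX2: "\<And>x. x \<in> carrier_vec n \<Longrightarrow> (pinv X *\<^sub>v x) \<bullet> (pinv X *\<^sub>v x) = (\<Sum>i<n. (1 / D i) * (x $ i)^2)"
    by (rule PX(2))
  have "X\<^sup>T * dmat n (\<lambda>i. 1 / D i) \<in> carrier_mat m n"
    using Xc by (intro mult_carrier_mat[of _ m n]) auto
  then have pXc: "pinv X \<in> carrier_mat m n" using PX1 by simp
  have upX: "(spec_norm (pinv X))^2 \<le> 1 / c"
  proof (rule spec_norm_upper[OF pXc])
    show "0 \<le> 1 / c" using c1 by simp
    fix x :: "real vec" assume x: "x \<in> carrier_vec n"
    have "(pinv X *\<^sub>v x) \<bullet> (pinv X *\<^sub>v x) = (\<Sum>i<n. (1 / D i) * (x $ i)^2)" using PX2[OF x] .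
    also have "\<dots> \<le> (\<Sum>i<n. (1 / c) * (x $ i)^2)"
    proof (rule sum_mono)
      fix i assume "i \<in> {..<n}"
      then have "1 / D i \<le> 1 / c" using Dc c1 by (simp add: frac_le)
      then show "(1 / D i) * (x $ i)^2 \<le> (1 / c) * (x $ i)^2" by (rule mult_right_mono) simp
    qed
    also have "\<dots> = 1 / c * (x \<bullet> x)" unfolding dot_self[OF x] sum_distrib_left ..
    finally show "(pinv X *\<^sub>v x) \<bullet> (pinv X *\<^sub>v x) \<le> 1 / c * (x \<bullet> x)" .
  qed
  have "\<forall>S. S \<subseteq> {..<m} \<and> card S = k \<and> mat_rank (col_submatrix X S) = n \<longrightarrow>
              (spec_norm (pinv (col_submatrix X S)))\<^sup>2 \<ge>
                ((real m + \<alpha>\<^sup>2) / (real k + \<alpha>\<^sup>2) - 1) * (spec_norm (pinv X))\<^sup>2"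
  proof (intro allI impI)
    fix S assume hS: "S \<subseteq> {..<m} \<and> card S = k \<and> mat_rank (col_submatrix X S) = n"
    then have Sm: "S \<subseteq> {..<m}" and cS: "card S = k" and rS: "mat_rank (col_submatrix X S) = n" by blast+
    define A where "A = col_submatrix X S"
    have cr: "card {i. i < dim_row X \<and> i \<in> UNIV} = n"
    proof -
      have dXr: "dim_row X = n" using Xc by simp
      have "{i. i < dim_row X \<and> i \<in> UNIV} = {..<n}" unfolding dXr by blast
      then show ?thesis by simp
    qed
    have cc: "card {j. j < dim_col X \<and> j \<in> S} = k"
    proof -
      have dX: "dim_col X = m" using Xc by simp
      have "{j. j < dim_col X \<and> j \<in> S} = S" unfolding dX using Sm by blast
      then show ?thesis using cS by simp
    qed
    have Ac: "A \<in> carrier_mat n k" unfolding A_def col_submatrix_def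
    proof (rule carrier_matI)
      show "dim_row (submatrix X UNIV S) = n" unfolding dim_submatrix(1) by (rule cr)
      show "dim_col (submatrix X UNIV S) = k" unfolding dim_submatrix(2) by (rule cc)
    qed
    have pS: "\<And>l. l < k \<Longrightarrow> pick S l \<in> S"
    proof -
      fix l assume "l < k"
      then have "l < card S" using cS by simp
      then show "pick S l \<in> S" by (rule pick_in_set_le)
    qed
    have Aidx: "\<And>i l. i < n \<Longrightarrow> l < k \<Longrightarrow> A $$ (i,l) = Xf n c i (pick S l)"
    proof -
      fix i l assume ir: "i < n" and lk: "l < k"
      have "A $$ (i,l) = X $$ (pick UNIV i, pick S l)" unfolding A_def col_submatrix_def
        by (rule submatrix_index) (use cr cc ir lk in auto)
      also have "\<dots> = X $$ (i, pick S l)" by (simp only: pick_UNIV)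
      also have "\<dots> = Xf n c i (pick S l)"
      proof (rule Xidx[OF ir])
        show "pick S l < m" using pS[OF lk] Sm by blast
      qed
      finally show "A $$ (i,l) = Xf n c i (pick S l)" .
    qed
    have sepA: "\<And>l i j. l < k \<Longrightarrow> i < n \<Longrightarrow> j < n \<Longrightarrow> i \<noteq> j \<Longrightarrow> A $$ (i,l) * A $$ (j,l) = 0"
    proof -
      fix l i j assume h: "l < k" "i < n" "j < n" "i \<noteq> j"
      show "A $$ (i,l) * A $$ (j,l) = 0" using Aidx[OF h(2,1)] Aidx[OF h(3,1)] Xf_sep[OF h(4)] by metis
    qed
    have dA: "dim_row A = n" using Ac by simp
    have rA: "vec_space.rank n A = n" using rS unfolding A_def[symmetric] mat_rank_def dA .
    have nz: "\<And>i. i < n \<Longrightarrow> \<exists>l<k. A $$ (i,l) \<noteq> 0"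
      using vec_space.rank_row_nonzero[OF Ac rA] by blast
    define d where "d = (\<lambda>i. \<Sum>l<k. (A $$ (i,l))^2)"
    have dpos: "\<And>i. i < n \<Longrightarrow> d i > 0"
    proof -
      fix i assume ir: "i < n"
      obtain l where l: "l < k" "A $$ (i,l) \<noteq> 0" using nz[OF ir] by blast
      have "0 < (A $$ (i,l))^2" using l by simp
      also have "\<dots> \<le> d i" unfolding d_def by (rule member_le_sum) (use l in auto)
      finally show "d i > 0" .
    qed
    note PA = pinv_diag[OF Ac sepA dpos d_def]
    have PA1: "pinv A = A\<^sup>T * dmat n (\<lambda>i. 1 / d i)" by (rule PA(1))
    have PA2: "\<And>x. x \<in> carrier_vec n \<Longrightarrow> (pinv A *\<^sub>v x) \<bullet> (pinv A *\<^sub>v x) = (\<Sum>i<n. (1 / d i) * (x $ i)^2)"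
      by (rule PA(2))
    have "A\<^sup>T * dmat n (\<lambda>i. 1 / d i) \<in> carrier_mat k n"
      using Ac by (intro mult_carrier_mat[of _ k n]) auto
    then have pAc: "pinv A \<in> carrier_mat k n" using PA1 by simp
    define x0 where "x0 = (unit_vec n (n - 1) :: real vec)"
    have x0c: "x0 \<in> carrier_vec n" unfolding x0_def by simp
    have x0i: "\<And>i. i < n \<Longrightarrow> (x0 $ i)^2 = (if i = n - 1 then 1 else 0)"
      unfolding x0_def by simp
    have x0n: "x0 \<bullet> x0 \<le> 1"
    proof -
      have "x0 \<bullet> x0 = (\<Sum>i<n. (x0 $ i)^2)" by (rule dot_self[OF x0c])
      also have "\<dots> = (\<Sum>i<n. (if i = n - 1 then 1 else 0 :: real))"
        by (rule sum.cong) (simp_all add: x0i)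
      also have "\<dots> = 1" using n0 by simp
      finally show ?thesis by simp
    qed
    have val: "(pinv A *\<^sub>v x0) \<bullet> (pinv A *\<^sub>v x0) = 1 / d (n - 1)"
    proof -
      have "(pinv A *\<^sub>v x0) \<bullet> (pinv A *\<^sub>v x0) = (\<Sum>i<n. (1 / d i) * (x0 $ i)^2)" using PA2[OF x0c] .
      also have "\<dots> = (\<Sum>i<n. (if i = n - 1 then 1 / d i else 0))"
        by (rule sum.cong) (use x0i in auto)
      also have "\<dots> = 1 / d (n - 1)" using n0 by simp
      finally show ?thesis .
    qed
    have lowA: "1 / d (n - 1) \<le> (spec_norm (pinv A))^2"
    proof -
      have "(pinv A *\<^sub>v x0) \<bullet> (pinv A *\<^sub>v x0) \<le> (spec_norm (pinv A))^2"
      proof (rule spec_norm_lower[OF pAc _ x0c x0n])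
        fix x :: "real vec" assume x: "x \<in> carrier_vec n" and xn: "x \<bullet> x \<le> 1"
        have "(pinv A *\<^sub>v x) \<bullet> (pinv A *\<^sub>v x) = (\<Sum>i<n. (1 / d i) * (x $ i)^2)" using PA2[OF x] .
        also have "\<dots> \<le> (\<Sum>i<n. (1 / d i))"
        proof (rule sum_mono)
          fix i assume i: "i \<in> {..<n}"
          have "(x $ i)^2 \<le> (\<Sum>j<n. (x $ j)^2)" by (rule member_le_sum) (use i in auto)
          also have "\<dots> = x \<bullet> x" by (rule dot_self[OF x, symmetric])
          also have "\<dots> \<le> 1" by (rule xn)
          finally have "(x $ i)^2 \<le> 1" .
          moreover have "0 \<le> 1 / d i" using dpos i by (simp add: less_imp_le)
          ultimately show "(1 / d i) * (x $ i)^2 \<le> 1 / d i" by (rule mult_left_le)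
        qed
        finally show "(pinv A *\<^sub>v x) \<bullet> (pinv A *\<^sub>v x) \<le> (\<Sum>i<n. (1 / d i))" .
      qed
      then show ?thesis using val by simp
    qed
    have dval: "d (n - 1) = real (card {l\<in>{..<k}. \<not> pick S l < n - 1})"
    proof -
      have "d (n - 1) = (\<Sum>l<k. (if pick S l < n - 1 then 0 else 1 :: real))"
        unfolding d_def by (rule sum.cong) (use Aidx n0 in \<open>auto simp: Xf_def\<close>)
      also have "\<dots> = real (card {l\<in>{..<k}. \<not> pick S l < n - 1})" by (rule sum_indic)
      finally show ?thesis .
    qed
    have cover: "{..<n - 1} \<subseteq> pick S ` {l\<in>{..<k}. pick S l < n - 1}"
    proof
      fix i assume i: "i \<in> {..<n - 1}"
      then have ir: "i < n" by auto
      obtain l where l: "l < k" "A $$ (i,l) \<noteq> 0" using nz[OF ir] by blast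
      have "Xf n c i (pick S l) \<noteq> 0" using l Aidx ir by simp
      then have "pick S l = i" using i unfolding Xf_def by (auto split: if_splits)
      then show "i \<in> pick S ` {l\<in>{..<k}. pick S l < n - 1}" using l i by force
    qed
    have "n - 1 \<le> card (pick S ` {l\<in>{..<k}. pick S l < n - 1})"
      using card_mono[OF _ cover] by simp
    also have "\<dots> \<le> card {l\<in>{..<k}. pick S l < n - 1}" by (rule card_image_le) simp
    finally have c1': "n - 1 \<le> card {l\<in>{..<k}. pick S l < n - 1}" .
    have "card {l\<in>{..<k}. pick S l < n - 1} + card {l\<in>{..<k}. \<not> pick S l < n - 1} = k"
      by (rule count_split)
    then have dle: "d (n - 1) \<le> real k - real n + 1" using dval c1' n0 nk by linarith
    have dp: "d (n - 1) > 0" using dpos n0 by simp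
    define f where "f = (real m + \<alpha>\<^sup>2) / (real k + \<alpha>\<^sup>2) - 1"
    have ka: "real k + \<alpha>\<^sup>2 > 0" using assms(1) by (simp add: add_nonneg_pos)
    have fv: "f = (real m - real k) / (real k + \<alpha>\<^sup>2)" unfolding f_def using ka by (simp add: field_simps)
    have f0: "f \<ge> 0" unfolding fv using km ka by simp
    have "f * (spec_norm (pinv X))^2 \<le> f * (1 / c)" using upX f0 by (rule mult_left_mono)
    also have "\<dots> \<le> 1 / (real k - real n + 1)"
    proof -
      have kn1: "real k - real n + 1 > 0" using nk by simp
      have "(real m - real k) * (real k - real n + 1) \<le> c * (real k + \<alpha>\<^sup>2)"
      proof (rule mult_mono)
        show "real m - real k \<le> c" unfolding c_def using nm n0 km nk by simp
        have "real n \<ge> 1" using n0 by simp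
        moreover have "0 \<le> \<alpha>\<^sup>2" by simp
        ultimately show "real k - real n + 1 \<le> real k + \<alpha>\<^sup>2" by linarith
      qed (use km c1 kn1 in auto)
      then have key: "(real m - real k) * (real k - real n + 1) \<le> c * (real k + \<alpha>\<^sup>2)" .
      have Bp: "c * (real k + \<alpha>\<^sup>2) > 0" using c1 ka by simp
      have e: "f * (1 / c) = (real m - real k) / (c * (real k + \<alpha>\<^sup>2))"
        unfolding fv by simp
      have "real m - real k \<le> (c * (real k + \<alpha>\<^sup>2)) / (real k - real n + 1)"
        using key kn1 by (simp add: pos_le_divide_eq)
      then have "(real m - real k) / (c * (real k + \<alpha>\<^sup>2))
          \<le> ((c * (real k + \<alpha>\<^sup>2)) / (real k - real n + 1)) / (c * (real k + \<alpha>\<^sup>2))"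
        using Bp by (intro divide_right_mono) auto
      also have "\<dots> = 1 / (real k - real n + 1)" using Bp ka c1 by simp
      finally show ?thesis using e by simp
    qed
    also have "\<dots> \<le> 1 / d (n - 1)" using dle dp by (simp add: frac_le)
    also have "\<dots> \<le> (spec_norm (pinv A))^2" by (rule lowA)
    finally show "(spec_norm (pinv (col_submatrix X S)))\<^sup>2 \<ge>
                ((real m + \<alpha>\<^sup>2) / (real k + \<alpha>\<^sup>2) - 1) * (spec_norm (pinv X))\<^sup>2"
      unfolding f_def A_def .
  qed
  then show ?thesis using Xc rX by blast
qed

end
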